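(* Let $(I,\preceq)$ be a finite poset with $|I|=n$. For each $i\in I$ let $G_i$ be a finite group with a symmetric generating set $S_i$, $1_{G_i}\notin S_i$, and let $\mathcal{G}_i=Cay(G_i,S_i)$. For $i\in I$ put $A(i)=\{j\in I: j\succ i\}$ and $F_i=\{\phi:\prod_{j\in A(i)}G_j\to G_i\}$ (if $A(i)=\emptyset$, $F_i$ is identified with $G_i$), and let $G=\prod_{i\in I}F_i$ be the generalized wreath product of the groups $G_i$ (defined in the context). For $i\in I$ and $s_i\in S_i$ let $\overline{f_{i,s_i}}\in G$ be the element whose $i$-th coordinate is the function $\overline{s_i}:\prod_{j\in A(i)}G_j\to G_i$ taking the value $s_i$ at $(1_{G_j})_{j\in A(i)}$ and the value $1_{G_i}$ elsewhere, and whose $q$-th coordinate, for every $q\neq i$, is the constant function with value $1_{G_q}$. Let $S=\{\overline{f_{i,s_i}}: i\in I,\ s_i\in S_i\}$. Then $S$ generates $G$, and the generalized wreath product graph $\mathcal{G}$ of the graphs $\{\mathcal{G}_i\}_{i\in I}$ (defined in the context) is the Cayley graph $Cay(G,S)$: its vertex set is the underlying set of $G$, and two vertices $f,h$ are adjacent in $\mathcal{G}$ if and only if $h=f\sigma$ for some $\sigma\in S$.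
   Context: Cayley graph: for a group $H$ with finite symmetric generating set $T$, $1_H\notin T$, $Cay(H,T)$ has vertex set $H$ and $g\sim g'$ iff $gt=g'$ for some $t\in T$. Generalized wreath product of groups: let $X=\prod_{i\in I}G_i$; for $J\subseteq I$ write $x_J=(x_j)_{j\in J}$. An element $f=(f_i)_{i\in I}\in G=\prod_i F_i$ acts on the right on $X$ by $xf=y$ with $y_i=x_i\cdot f_i(x_{A(i)})$ for each $i$ (product in $G_i$). This action is faithful, and $G$ is the permutation group so obtained, with product $fh$ meaning "first $f$, then $h$", i.e. $x(fh)=(xf)h$; explicitly $(fh)_i(z)=f_i(z)\cdot h_i\big((z_j f_j(z_{A(j)}))_{j\in A(i)}\big)$ for $z\in\prod_{j\in A(i)}G_j$ (note $A(j)\subseteq A(i)$ for $j\in A(i)$). Generalized wreath product of the graphs $\mathcal{G}_i=Cay(G_i,S_i)$: the graph $\mathcal{G}$ has vertex set $\{(f_1,\ldots,f_n): f_i\in F_i\}$. For such a vertex $f$, define elements $e_j(f)\in G_j$ recursively (by induction along $\preceq$, starting from indices $j$ with $A(j)=\emptyset$) by $e_j(f)=f_j\big((e_k(f)^{-1})_{k\in A(j)}\big)$. Vertices $f$ and $h$ are adjacent iff there exists $i\in I$ such that (1) $f_j=h_j$ for every $j\neq i$; and (2) letting $p_i(f)=(e_k(f)^{-1})_{k\in A(i)}$, $f_i(z)=h_i(z)$ for all $z\neq p_i(f)$, and $f_i(p_i(f))$ and $h_i(p_i(f))$ are adjacent in $\mathcal{G}_i$. *)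

theory Defs
  imports "HOL-Algebra.Generated_Groups"
begin

text \<open>Index poset: a finite type 'i with a partial order.  Groups: a family
  Gs :: 'i => 'g monoid of HOL-Algebra groups.  Tuples in prod_{j in A(i)} G_j are
  extensional functions on A(i).\<close>

definition up_set :: "'i::order \<Rightarrow> 'i set" where
  "up_set i = {j. i < j}"

definition args :: "('i::order \<Rightarrow> 'g monoid) \<Rightarrow> 'i \<Rightarrow> ('i \<Rightarrow> 'g) set" where
  "args Gs i = (\<Pi>\<^sub>E j\<in>up_set i. carrier (Gs j))"

definition Fset :: "('i::order \<Rightarrow> 'g monoid) \<Rightarrow> 'i \<Rightarrow> (('i \<Rightarrow> 'g) \<Rightarrow> 'g) set" where
  "Fset Gs i = (args Gs i \<rightarrow>\<^sub>E carrier (Gs i))"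

definition gw_carrier :: "('i::order \<Rightarrow> 'g monoid) \<Rightarrow> ('i \<Rightarrow> ('i \<Rightarrow> 'g) \<Rightarrow> 'g) set" where
  "gw_carrier Gs = {f. \<forall>i. f i \<in> Fset Gs i}"

text \<open>Product fh = first f, then h:
  (fh)_i(z) = f_i(z) * h_i((z_j f_j(z_{A(j)}))_{j in A(i)}).\<close>
definition gw_mult :: "('i::order \<Rightarrow> 'g monoid) \<Rightarrow> ('i \<Rightarrow> ('i \<Rightarrow> 'g) \<Rightarrow> 'g)
    \<Rightarrow> ('i \<Rightarrow> ('i \<Rightarrow> 'g) \<Rightarrow> 'g) \<Rightarrow> ('i \<Rightarrow> ('i \<Rightarrow> 'g) \<Rightarrow> 'g)" where
  "gw_mult Gs f h = (\<lambda>i. \<lambda>z\<in>args Gs i.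
      f i z \<otimes>\<^bsub>Gs i\<^esub> h i (\<lambda>j\<in>up_set i. z j \<otimes>\<^bsub>Gs j\<^esub> f j (restrict z (up_set j))))"

definition gw_one :: "('i::order \<Rightarrow> 'g monoid) \<Rightarrow> ('i \<Rightarrow> ('i \<Rightarrow> 'g) \<Rightarrow> 'g)" where
  "gw_one Gs = (\<lambda>i. \<lambda>z\<in>args Gs i. \<one>\<^bsub>Gs i\<^esub>)"

definition gen_wreath :: "('i::order \<Rightarrow> 'g monoid) \<Rightarrow> ('i \<Rightarrow> ('i \<Rightarrow> 'g) \<Rightarrow> 'g) monoid" where
  "gen_wreath Gs = \<lparr>carrier = gw_carrier Gs, mult = gw_mult Gs, one = gw_one Gs\<rparr>"

definition fbar :: "('i::order \<Rightarrow> 'g monoid) \<Rightarrow> 'i \<Rightarrow> 'g \<Rightarrow> ('i \<Rightarrow> ('i \<Rightarrow> 'g) \<Rightarrow> 'g)" where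
  "fbar Gs i s = (\<lambda>q. if q = i
      then (\<lambda>z\<in>args Gs i. if z = (\<lambda>j\<in>up_set i. \<one>\<^bsub>Gs j\<^esub>) then s else \<one>\<^bsub>Gs i\<^esub>)
      else (\<lambda>z\<in>args Gs q. \<one>\<^bsub>Gs q\<^esub>))"

definition gw_gens :: "('i::order \<Rightarrow> 'g monoid) \<Rightarrow> ('i \<Rightarrow> 'g set) \<Rightarrow> ('i \<Rightarrow> ('i \<Rightarrow> 'g) \<Rightarrow> 'g) set" where
  "gw_gens Gs S = {fbar Gs i s | i s. s \<in> S i}"

definition cayley_adj :: "('a, 'b) monoid_scheme \<Rightarrow> 'a set \<Rightarrow> 'a \<Rightarrow> 'a \<Rightarrow> bool" where
  "cayley_adj H T g g' \<longleftrightarrow> g \<in> carrier H \<and> g' \<in> carrier H \<and> (\<exists>t\<in>T. g \<otimes>\<^bsub>H\<^esub> t = g')"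

definition e_vals :: "('i::{finite,order} \<Rightarrow> 'g monoid) \<Rightarrow> ('i \<Rightarrow> ('i \<Rightarrow> 'g) \<Rightarrow> 'g) \<Rightarrow> 'i \<Rightarrow> 'g" where
  "e_vals Gs f = wfrec {(k, j). j < k}
      (\<lambda>rec j. f j (\<lambda>k\<in>up_set j. inv\<^bsub>Gs k\<^esub> (rec k)))"

definition p_pt :: "('i::{finite,order} \<Rightarrow> 'g monoid) \<Rightarrow> ('i \<Rightarrow> ('i \<Rightarrow> 'g) \<Rightarrow> 'g) \<Rightarrow> 'i \<Rightarrow> ('i \<Rightarrow> 'g)" where
  "p_pt Gs f i = (\<lambda>k\<in>up_set i. inv\<^bsub>Gs k\<^esub> (e_vals Gs f k))"

definition gw_graph_vertices :: "('i::{finite,order} \<Rightarrow> 'g monoid) \<Rightarrow> ('i \<Rightarrow> ('i \<Rightarrow> 'g) \<Rightarrow> 'g) set" where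
  "gw_graph_vertices Gs = {f. \<forall>i. f i \<in> Fset Gs i}"

definition gw_graph_adj :: "('i::{finite,order} \<Rightarrow> 'g monoid) \<Rightarrow> ('i \<Rightarrow> 'g set)
    \<Rightarrow> ('i \<Rightarrow> ('i \<Rightarrow> 'g) \<Rightarrow> 'g) \<Rightarrow> ('i \<Rightarrow> ('i \<Rightarrow> 'g) \<Rightarrow> 'g) \<Rightarrow> bool" where
  "gw_graph_adj Gs S f h \<longleftrightarrow>
     f \<in> gw_graph_vertices Gs \<and> h \<in> gw_graph_vertices Gs \<and>
     (\<exists>i. (\<forall>j. j \<noteq> i \<longrightarrow> f j = h j) \<and>
          (\<forall>z\<in>args Gs i. z \<noteq> p_pt Gs f i \<longrightarrow> f i z = h i z) \<and>
          cayley_adj (Gs i) (S i) (f i (p_pt Gs f i)) (h i (p_pt Gs f i)))"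

end

theory Submission
  imports Defs
begin

definition act :: "('i::order \<Rightarrow> 'g monoid) \<Rightarrow> ('i \<Rightarrow> ('i \<Rightarrow> 'g) \<Rightarrow> 'g) \<Rightarrow> ('i \<Rightarrow> 'g) \<Rightarrow> ('i \<Rightarrow> 'g)" where
  "act Gs f z = (\<lambda>j. z j \<otimes>\<^bsub>Gs j\<^esub> f j (restrict z (up_set j)))"

lemma up_set_trans: "j \<in> up_set i \<Longrightarrow> up_set j \<subseteq> up_set i"
  by (auto simp: up_set_def)

lemma up_set_irrefl[simp]: "i \<notin> up_set i"
  by (auto simp: up_set_def)

lemma restrict_restrict_sub: "A \<subseteq> B \<Longrightarrow> restrict (restrict z B) A = restrict z A"
  by (rule ext) (auto simp: restrict_def)

lemma gw_mult_eq: "z \<in> args Gs i \<Longrightarrow> gw_mult Gs f h i z = f i z \<otimes>\<^bsub>Gs i\<^esub> h i (restrict (act Gs f z) (up_set i))"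
  by (simp add: gw_mult_def act_def restrict_def)

lemma gw_mult_out: "z \<notin> args Gs i \<Longrightarrow> gw_mult Gs f h i z = undefined"
  by (simp add: gw_mult_def)

lemma act_restrict: "k \<in> up_set j \<Longrightarrow> act Gs f (restrict z (up_set j)) k = act Gs f z k"
  using up_set_trans[of k j] by (simp add: act_def Int_absorb1)

lemma restrict_act_restrict: "restrict (act Gs f (restrict z (up_set j))) (up_set j) = restrict (act Gs f z) (up_set j)"
  by (rule restrict_ext) (simp add: act_restrict)

locale gw =
  fixes Gs :: "'i::{finite,order} \<Rightarrow> 'g monoid"
  assumes grp: "\<And>i. group (Gs i)"
begin

lemma mon: "monoid (Gs i)" using grp group.is_monoid by blast

lemmas Gassoc = monoid.m_assoc[OF mon]
lemmas Gclosed = monoid.m_closed[OF mon]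
lemmas Gone = monoid.one_closed[OF mon]
lemmas Gl_one = monoid.l_one[OF mon]
lemmas Gr_one = monoid.r_one[OF mon]
lemmas Ginv_closed = group.inv_closed[OF grp]
lemmas Gl_inv = group.l_inv[OF grp]
lemmas Gr_inv = group.r_inv[OF grp]

lemma args_restrict: "z \<in> args Gs i \<Longrightarrow> j \<in> up_set i \<Longrightarrow> restrict z (up_set j) \<in> args Gs j"
  using up_set_trans[of j i] by (auto simp: args_def)

lemma args_in: "z \<in> args Gs i \<Longrightarrow> j \<in> up_set i \<Longrightarrow> z j \<in> carrier (Gs j)"
  by (auto simp: args_def)

lemma Fset_app: "f \<in> gw_carrier Gs \<Longrightarrow> z \<in> args Gs i \<Longrightarrow> f i z \<in> carrier (Gs i)"
  by (auto simp: gw_carrier_def Fset_def)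

lemma Fset_out: "f \<in> gw_carrier Gs \<Longrightarrow> z \<notin> args Gs i \<Longrightarrow> f i z = undefined"
  by (auto simp: gw_carrier_def Fset_def)

lemma act_args: "f \<in> gw_carrier Gs \<Longrightarrow> z \<in> args Gs i \<Longrightarrow> restrict (act Gs f z) (up_set i) \<in> args Gs i"
  unfolding args_def using args_restrict args_in Fset_app Gclosed
  by (auto simp: act_def args_def) 

lemma mult_closed: "f \<in> gw_carrier Gs \<Longrightarrow> h \<in> gw_carrier Gs \<Longrightarrow> gw_mult Gs f h \<in> gw_carrier Gs"
  unfolding gw_carrier_def Fset_def
  using act_args Fset_app Gclosed by (auto simp: gw_mult_eq gw_mult_out gw_carrier_def Fset_def)

lemma one_closed: "gw_one Gs \<in> gw_carrier Gs"
  by (auto simp: gw_carrier_def Fset_def gw_one_def Gone)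

lemma gw_one_app: "z \<in> args Gs i \<Longrightarrow> gw_one Gs i z = \<one>\<^bsub>Gs i\<^esub>"
  by (simp add: gw_one_def)

lemma act_one: "z \<in> args Gs i \<Longrightarrow> restrict (act Gs (gw_one Gs) z) (up_set i) = z"
  apply (rule ext)
  using args_restrict args_in
  by (auto simp: act_def gw_one_def Gr_one args_def restrict_def)

lemma l_one: "f \<in> gw_carrier Gs \<Longrightarrow> gw_mult Gs (gw_one Gs) f = f"
  apply (rule ext)+
  subgoal for i z
    by (cases "z \<in> args Gs i") (auto simp: gw_mult_eq gw_mult_out Fset_out act_one Gl_one Fset_app gw_one_app)
  done

lemma r_one: "f \<in> gw_carrier Gs \<Longrightarrow> gw_mult Gs f (gw_one Gs) = f"
  apply (rule ext)+
  subgoal for i z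
    using act_args[of f z i]
    by (cases "z \<in> args Gs i") (auto simp: gw_mult_eq gw_mult_out Fset_out Gr_one Fset_app gw_one_app)
  done

lemma act_mult: "f \<in> gw_carrier Gs \<Longrightarrow> h \<in> gw_carrier Gs \<Longrightarrow> z \<in> args Gs i \<Longrightarrow> j \<in> up_set i \<Longrightarrow>
   act Gs (gw_mult Gs f h) z j = act Gs h (restrict (act Gs f z) (up_set i)) j"
proof -
  assume f: "f \<in> gw_carrier Gs" and h: "h \<in> gw_carrier Gs" and z: "z \<in> args Gs i" and j: "j \<in> up_set i"
  have zj: "restrict z (up_set j) \<in> args Gs j" using args_restrict z j .
  have e: "restrict (restrict (act Gs f z) (up_set i)) (up_set j) = restrict (act Gs f z) (up_set j)"
    using up_set_trans[OF j] by (simp add: Int_absorb1 inf.absorb2)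
  have "act Gs (gw_mult Gs f h) z j = z j \<otimes>\<^bsub>Gs j\<^esub> (f j (restrict z (up_set j)) \<otimes>\<^bsub>Gs j\<^esub>
      h j (restrict (act Gs f (restrict z (up_set j))) (up_set j)))"
    by (simp add: act_def gw_mult_eq[OF zj])
  also have "\<dots> = (z j \<otimes>\<^bsub>Gs j\<^esub> f j (restrict z (up_set j))) \<otimes>\<^bsub>Gs j\<^esub>
      h j (restrict (act Gs f z) (up_set j))"
    using Gassoc args_in[OF z j] Fset_app[OF f zj] Fset_app[OF h act_args[OF f zj]]
    by (simp add: restrict_act_restrict)
  also have "\<dots> = act Gs h (restrict (act Gs f z) (up_set i)) j"
    using j up_set_trans[OF j] by (simp add: act_def e Int_absorb1 Int_absorb2)
  finally show ?thesis .
qed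

lemma assoc: "f \<in> gw_carrier Gs \<Longrightarrow> h \<in> gw_carrier Gs \<Longrightarrow> k \<in> gw_carrier Gs \<Longrightarrow>
  gw_mult Gs (gw_mult Gs f h) k = gw_mult Gs f (gw_mult Gs h k)"
proof (rule ext, rule ext)
  fix i z
  assume f: "f \<in> gw_carrier Gs" and h: "h \<in> gw_carrier Gs" and k: "k \<in> gw_carrier Gs"
  show "gw_mult Gs (gw_mult Gs f h) k i z = gw_mult Gs f (gw_mult Gs h k) i z"
  proof (cases "z \<in> args Gs i")
    case False thus ?thesis by (simp add: gw_mult_out)
  next
    case z: True
    define w where "w = restrict (act Gs f z) (up_set i)"
    have w: "w \<in> args Gs i" using act_args[OF f z] w_def by simp
    have e: "restrict (act Gs (gw_mult Gs f h) z) (up_set i) = restrict (act Gs h w) (up_set i)"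
      by (rule restrict_ext) (simp add: act_mult[OF f h z] w_def)
    have "gw_mult Gs (gw_mult Gs f h) k i z = (f i z \<otimes>\<^bsub>Gs i\<^esub> h i w) \<otimes>\<^bsub>Gs i\<^esub> k i (restrict (act Gs h w) (up_set i))"
      by (simp add: gw_mult_eq[OF z] e w_def)
    also have "\<dots> = f i z \<otimes>\<^bsub>Gs i\<^esub> (h i w \<otimes>\<^bsub>Gs i\<^esub> k i (restrict (act Gs h w) (up_set i)))"
      using Gassoc Fset_app[OF f z] Fset_app[OF h w] Fset_app[OF k act_args[OF h w]] by simp
    also have "\<dots> = f i z \<otimes>\<^bsub>Gs i\<^esub> gw_mult Gs h k i w"
      by (simp add: gw_mult_eq[OF w])
    also have "\<dots> = gw_mult Gs f (gw_mult Gs h k) i z"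
      by (simp add: gw_mult_eq[OF z] w_def)
    finally show ?thesis .
  qed
qed

lemma monoid_gw: "monoid (gen_wreath Gs)"
  by (rule monoidI) (auto simp: gen_wreath_def mult_closed one_closed assoc l_one r_one)


definition pure :: "'i \<Rightarrow> (('i \<Rightarrow> 'g) \<Rightarrow> 'g) \<Rightarrow> ('i \<Rightarrow> ('i \<Rightarrow> 'g) \<Rightarrow> 'g)" where
  "pure m \<phi> = (\<lambda>q. if q = m then \<phi> else (\<lambda>v\<in>args Gs q. \<one>\<^bsub>Gs q\<^esub>))"

definition delta :: "'i \<Rightarrow> ('i \<Rightarrow> 'g) \<Rightarrow> 'g \<Rightarrow> ('i \<Rightarrow> ('i \<Rightarrow> 'g) \<Rightarrow> 'g)" where
  "delta m w g = pure m (\<lambda>v\<in>args Gs m. if v = w then g else \<one>\<^bsub>Gs m\<^esub>)"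

definition onept :: "'i \<Rightarrow> ('i \<Rightarrow> 'g)" where
  "onept m = (\<lambda>j\<in>up_set m. \<one>\<^bsub>Gs j\<^esub>)"

definition cst :: "('i \<Rightarrow> 'g) \<Rightarrow> ('i \<Rightarrow> ('i \<Rightarrow> 'g) \<Rightarrow> 'g)" where
  "cst c = (\<lambda>q. \<lambda>v\<in>args Gs q. c q)"

lemma onept_args: "onept m \<in> args Gs m"
  by (simp add: onept_def args_def Gone)

lemma fbar_delta: "fbar Gs i s = delta i (onept i) s"
  by (rule ext) (simp add: fbar_def delta_def pure_def onept_def)

lemma pure_closed: "\<phi> \<in> Fset Gs m \<Longrightarrow> pure m \<phi> \<in> gw_carrier Gs"
  by (auto simp: pure_def gw_carrier_def Fset_def Gone)

lemma delta_closed: "g \<in> carrier (Gs m) \<Longrightarrow> delta m w g \<in> gw_carrier Gs"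
  unfolding delta_def by (rule pure_closed) (auto simp: Fset_def Gone)

lemma cst_closed: "(\<And>q. c q \<in> carrier (Gs q)) \<Longrightarrow> cst c \<in> gw_carrier Gs"
  by (auto simp: cst_def gw_carrier_def Fset_def)

lemma cst_one: "cst (\<lambda>q. \<one>\<^bsub>Gs q\<^esub>) = gw_one Gs"
  by (simp add: cst_def gw_one_def)

lemma act_triv: "f j = (\<lambda>v\<in>args Gs j. \<one>\<^bsub>Gs j\<^esub>) \<Longrightarrow> z \<in> args Gs i \<Longrightarrow> j \<in> up_set i \<Longrightarrow> act Gs f z j = z j"
  using args_restrict[of z i j] args_in[of z i j] by (simp add: act_def Gr_one)

lemma restrict_act_pure: "z \<in> args Gs i \<Longrightarrow> restrict (act Gs (pure i \<phi>) z) (up_set i) = z"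
proof (rule ext)
  fix j assume z: "z \<in> args Gs i"
  show "restrict (act Gs (pure i \<phi>) z) (up_set i) j = z j"
  proof (cases "j \<in> up_set i")
    case True
    then have "j \<noteq> i" by auto
    then have "pure i \<phi> j = (\<lambda>v\<in>args Gs j. \<one>\<^bsub>Gs j\<^esub>)" by (simp add: pure_def)
    then show ?thesis using act_triv[of "pure i \<phi>" j z i] z True by simp
  next
    case False then show ?thesis using z by (auto simp: args_def)
  qed
qed

lemma pure_mult: "\<phi> \<in> Fset Gs m \<Longrightarrow> \<psi> \<in> Fset Gs m \<Longrightarrow>
   gw_mult Gs (pure m \<phi>) (pure m \<psi>) = pure m (\<lambda>v\<in>args Gs m. \<phi> v \<otimes>\<^bsub>Gs m\<^esub> \<psi> v)"
  apply (rule ext)+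
  subgoal for q z
    using act_args[OF pure_closed, of \<phi> m z q]
    apply (cases "z \<in> args Gs q")
     apply (cases "q = m")
      apply (simp add: gw_mult_eq restrict_act_pure)
      apply (simp add: pure_def)
     apply (simp add: gw_mult_eq pure_def Gl_one Gone)
    apply (auto simp add: gw_mult_out pure_def)
    done
  done

lemma cst_mult: "(\<And>q. c q \<in> carrier (Gs q)) \<Longrightarrow> (\<And>q. d q \<in> carrier (Gs q)) \<Longrightarrow>
   gw_mult Gs (cst c) (cst d) = cst (\<lambda>q. c q \<otimes>\<^bsub>Gs q\<^esub> d q)"
  apply (rule ext)+
  subgoal for q z
    using act_args[OF cst_closed, of c z q]
    by (cases "z \<in> args Gs q") (auto simp: gw_mult_eq gw_mult_out cst_def)
  done

lemma cst_single: "cst (\<lambda>q. if q = j then a else \<one>\<^bsub>Gs q\<^esub>) = pure j (\<lambda>v\<in>args Gs j. a)"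
  by (rule ext) (auto simp: cst_def pure_def)

lemma delta_mult: "g \<in> carrier (Gs m) \<Longrightarrow> g' \<in> carrier (Gs m) \<Longrightarrow>
  gw_mult Gs (delta m w g) (delta m w g') = delta m w (g \<otimes>\<^bsub>Gs m\<^esub> g')"
  unfolding delta_def
  by (subst pure_mult) (auto simp: Fset_def Gone Gl_one Gr_one intro!: arg_cong[where f="pure m"])

lemma delta_one: "delta m w \<one>\<^bsub>Gs m\<^esub> = gw_one Gs"
  by (rule ext) (simp add: delta_def pure_def gw_one_def)

lemma wfR: "wf {(k::'i, j). j < k}"
proof (rule finite_acyclic_wf)
  show "finite {(k::'i, j). j < k}" by simp
  have t: "trans {(k::'i, j). j < k}" by (auto simp: trans_def)
  show "acyclic {(k::'i, j). j < k}"
    unfolding acyclic_irrefl trancl_id[OF t] by (auto simp: irrefl_def)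
qed

lemma gen_mult: "a \<in> generate (gen_wreath Gs) H \<Longrightarrow> b \<in> generate (gen_wreath Gs) H \<Longrightarrow> gw_mult Gs a b \<in> generate (gen_wreath Gs) H"
  using generate.eng[of a "gen_wreath Gs" H b] by (simp add: gen_wreath_def)

lemma gen_one: "gw_one Gs \<in> generate (gen_wreath Gs) H"
  using generate.one[of "gen_wreath Gs" H] by (simp add: gen_wreath_def)

lemma D1:
  assumes sub: "S m \<subseteq> carrier (Gs m)" and symm: "\<And>s. s \<in> S m \<Longrightarrow> inv\<^bsub>Gs m\<^esub> s \<in> S m"
    and g: "g \<in> generate (Gs m) (S m)"
  shows "delta m (onept m) g \<in> generate (gen_wreath Gs) (gw_gens Gs S)"
  using g
proof (induction g rule: generate.induct)
  case one
  then show ?case by (simp add: delta_one gen_one)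
next
  case (incl h)
  then show ?case by (auto simp: gw_gens_def fbar_delta intro!: generate.incl)
next
  case (inv h)
  then have "inv\<^bsub>Gs m\<^esub> h \<in> S m" using symm by blast
  then show ?case by (auto simp: gw_gens_def fbar_delta intro!: generate.incl)
next
  case (eng h1 h2)
  have c: "h1 \<in> carrier (Gs m)" "h2 \<in> carrier (Gs m)"
    using group.generate_in_carrier[OF grp sub] eng.hyps by auto
  show ?case using gen_mult[OF eng.IH] delta_mult[OF c] by simp
qed

lemma pure_gen:
  assumes fin: "\<And>i. finite (carrier (Gs i))"
    and D: "\<forall>w\<in>args Gs m. \<forall>g\<in>carrier (Gs m). delta m w g \<in> generate (gen_wreath Gs) H"
    and phi: "\<phi> \<in> Fset Gs m"
  shows "pure m \<phi> \<in> generate (gen_wreath Gs) H"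
proof -
  have phic: "\<And>v. v \<in> args Gs m \<Longrightarrow> \<phi> v \<in> carrier (Gs m)" using phi by (auto simp: Fset_def)
  have "finite W \<Longrightarrow> W \<subseteq> args Gs m \<Longrightarrow> pure m (\<lambda>v\<in>args Gs m. if v \<in> W then \<phi> v else \<one>\<^bsub>Gs m\<^esub>) \<in> generate (gen_wreath Gs) H" for W
  proof (induction W rule: finite_induct)
    case empty
    have "pure m (\<lambda>v\<in>args Gs m. if v \<in> {} then \<phi> v else \<one>\<^bsub>Gs m\<^esub>) = gw_one Gs"
      by (rule ext) (simp add: pure_def gw_one_def)
    then show ?case using gen_one by (simp add: restrict_def)
  next
    case (insert w W)
    have w: "w \<in> args Gs m" using insert by auto
    have e: "pure m (\<lambda>v\<in>args Gs m. if v \<in> insert w W then \<phi> v else \<one>\<^bsub>Gs m\<^esub>) =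
      gw_mult Gs (pure m (\<lambda>v\<in>args Gs m. if v \<in> W then \<phi> v else \<one>\<^bsub>Gs m\<^esub>)) (delta m w (\<phi> w))"
      unfolding delta_def
      apply (subst pure_mult)
        apply (auto simp: Fset_def Gone phic)[2]
      apply (rule arg_cong[where f="pure m"])
      using insert.hyps(2) by (auto simp: Gl_one Gr_one phic Gone)
    show ?case unfolding e
      using insert w D phic by (intro gen_mult) (auto simp: restrict_def)
  qed
  moreover have "finite (args Gs m)" unfolding args_def using fin by (auto intro!: finite_PiE)
  ultimately have "pure m (\<lambda>v\<in>args Gs m. if v \<in> args Gs m then \<phi> v else \<one>\<^bsub>Gs m\<^esub>) \<in> generate (gen_wreath Gs) H"
    by blast
  moreover have "(\<lambda>v\<in>args Gs m. if v \<in> args Gs m then \<phi> v else \<one>\<^bsub>Gs m\<^esub>) = \<phi>"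
    using phi by (auto simp: Fset_def fun_eq_iff)
  ultimately show ?thesis by simp
qed

lemma cst_gen:
  assumes P: "\<forall>j\<in>T. \<forall>\<phi>\<in>Fset Gs j. pure j \<phi> \<in> generate (gen_wreath Gs) H"
    and c: "\<And>q. c q \<in> carrier (Gs q)" and c1: "\<And>q. q \<notin> T \<Longrightarrow> c q = \<one>\<^bsub>Gs q\<^esub>"
  shows "cst c \<in> generate (gen_wreath Gs) H"
proof -
  have "finite W \<Longrightarrow> W \<subseteq> T \<Longrightarrow> cst (\<lambda>q. if q \<in> W then c q else \<one>\<^bsub>Gs q\<^esub>) \<in> generate (gen_wreath Gs) H" for W
  proof (induction W rule: finite_induct)
    case empty
    then show ?case using gen_one cst_one by simp
  next
    case (insert j W)
    have e: "cst (\<lambda>q. if q \<in> insert j W then c q else \<one>\<^bsub>Gs q\<^esub>) =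
      gw_mult Gs (cst (\<lambda>q. if q \<in> W then c q else \<one>\<^bsub>Gs q\<^esub>)) (cst (\<lambda>q. if q = j then c j else \<one>\<^bsub>Gs q\<^esub>))"
      apply (subst cst_mult)
        apply (auto simp: c Gone)[2]
      apply (rule arg_cong[where f="cst"])
      using insert.hyps(2) by (auto simp: Gl_one Gr_one c Gone)
    have "pure j (\<lambda>v\<in>args Gs j. c j) \<in> generate (gen_wreath Gs) H"
      using P insert.prems c by (auto simp: Fset_def)
    then show ?case unfolding e cst_single using insert by (auto intro!: gen_mult)
  qed
  then have "cst (\<lambda>q. if q \<in> T then c q else \<one>\<^bsub>Gs q\<^esub>) \<in> generate (gen_wreath Gs) H" by simp
  moreover have "(\<lambda>q. if q \<in> T then c q else \<one>\<^bsub>Gs q\<^esub>) = c" using c1 by auto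
  ultimately show ?thesis by simp
qed

lemma Ginv_eq_one: "a \<in> carrier (Gs j) \<Longrightarrow> b \<in> carrier (Gs j) \<Longrightarrow> (a \<otimes>\<^bsub>Gs j\<^esub> inv\<^bsub>Gs j\<^esub> b = \<one>\<^bsub>Gs j\<^esub>) = (a = b)"
  by (metis Ginv_closed Gassoc Gl_inv Gr_inv Gr_one Gl_one)

lemma delta_app: "v \<in> args Gs q \<Longrightarrow> delta m w g q v = (if q = m then (if v = w then g else \<one>\<^bsub>Gs m\<^esub>) else \<one>\<^bsub>Gs q\<^esub>)"
  by (auto simp: delta_def pure_def)

lemma delta_out: "v \<notin> args Gs q \<Longrightarrow> delta m w g q v = undefined"
  by (auto simp: delta_def pure_def)

lemma conj:
  assumes z: "z \<in> args Gs m" and g: "g \<in> carrier (Gs m)"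
  defines "c \<equiv> (\<lambda>q. if q \<in> up_set m then inv\<^bsub>Gs q\<^esub> z q else \<one>\<^bsub>Gs q\<^esub>)"
    and "c' \<equiv> (\<lambda>q. if q \<in> up_set m then z q else \<one>\<^bsub>Gs q\<^esub>)"
  shows "delta m z g = gw_mult Gs (gw_mult Gs (cst c) (delta m (onept m) g)) (cst c')"
proof (rule ext, rule ext)
  fix q v
  have cc: "\<And>q. c q \<in> carrier (Gs q)" "\<And>q. c' q \<in> carrier (Gs q)"
    using args_in[OF z] by (auto simp: c_def c'_def Ginv_closed Gone)
  have C: "cst c \<in> gw_carrier Gs" "cst c' \<in> gw_carrier Gs" using cst_closed cc by auto
  have D: "delta m (onept m) g \<in> gw_carrier Gs" using delta_closed g by auto
  have CD: "gw_mult Gs (cst c) (delta m (onept m) g) \<in> gw_carrier Gs" using mult_closed C D by auto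
  show "delta m z g q v = gw_mult Gs (gw_mult Gs (cst c) (delta m (onept m) g)) (cst c') q v"
  proof (cases "v \<in> args Gs q")
    case False then show ?thesis by (simp add: delta_out gw_mult_out)
  next
    case v: True
    have r1: "gw_mult Gs (gw_mult Gs (cst c) (delta m (onept m) g)) (cst c') q v
       = (c q \<otimes>\<^bsub>Gs q\<^esub> delta m (onept m) g q (restrict (act Gs (cst c) v) (up_set q))) \<otimes>\<^bsub>Gs q\<^esub> c' q"
      using act_args[OF CD v] v by (simp add: gw_mult_eq[OF v] cst_def)
    have a: "restrict (act Gs (cst c) v) (up_set q) \<in> args Gs q" using act_args[OF C(1) v] .
    show ?thesis
    proof (cases "q = m")
      case True
      have "(restrict (act Gs (cst c) v) (up_set m) = onept m) = (v = z)"
      proof -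
        have "(restrict (act Gs (cst c) v) (up_set m) = onept m) = (\<forall>j\<in>up_set m. v j \<otimes>\<^bsub>Gs j\<^esub> inv\<^bsub>Gs j\<^esub> z j = \<one>\<^bsub>Gs j\<^esub>)"
          using v True args_restrict[OF v] by (auto simp: fun_eq_iff onept_def act_def cst_def c_def restrict_def)
        also have "\<dots> = (\<forall>j\<in>up_set m. v j = z j)"
          using Ginv_eq_one args_in v z True by auto
        also have "\<dots> = (v = z)" using v z True by (auto simp: args_def fun_eq_iff PiE_def extensional_def)
        finally show ?thesis .
      qed
      moreover have "c m = \<one>\<^bsub>Gs m\<^esub>" "c' m = \<one>\<^bsub>Gs m\<^esub>" by (auto simp: c_def c'_def)
      ultimately show ?thesis using True r1 a v g by (simp add: delta_app Gl_one Gr_one Gone)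
    next
      case False
      have "c q \<otimes>\<^bsub>Gs q\<^esub> c' q = \<one>\<^bsub>Gs q\<^esub>"
        using args_in[OF z] by (auto simp: c_def c'_def Gl_inv Gone Gl_one)
      then show ?thesis using False r1 a v cc by (simp add: delta_app Gr_one)
    qed
  qed
qed

lemma delta_gen:
  assumes fin: "\<And>i. finite (carrier (Gs i))"
    and sub: "\<And>i. S i \<subseteq> carrier (Gs i)"
    and symm: "\<And>i s. s \<in> S i \<Longrightarrow> inv\<^bsub>Gs i\<^esub> s \<in> S i"
    and gen: "\<And>i. generate (Gs i) (S i) = carrier (Gs i)"
  shows "\<forall>z\<in>args Gs m. \<forall>g\<in>carrier (Gs m). delta m z g \<in> generate (gen_wreath Gs) (gw_gens Gs S)"
proof (induction m rule: wf_induct_rule[OF wfR])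
  case (1 m)
  have P: "\<forall>j\<in>up_set m. \<forall>\<phi>\<in>Fset Gs j. pure j \<phi> \<in> generate (gen_wreath Gs) (gw_gens Gs S)"
    using 1 pure_gen[OF fin] by (auto simp: up_set_def)
  show ?case
  proof (intro ballI)
    fix z g assume z: "z \<in> args Gs m" and g: "g \<in> carrier (Gs m)"
    have a: "cst (\<lambda>q. if q \<in> up_set m then inv\<^bsub>Gs q\<^esub> z q else \<one>\<^bsub>Gs q\<^esub>) \<in> generate (gen_wreath Gs) (gw_gens Gs S)"
      by (rule cst_gen[OF P]) (use args_in[OF z] in \<open>auto simp: Ginv_closed Gone\<close>)
    have b: "cst (\<lambda>q. if q \<in> up_set m then z q else \<one>\<^bsub>Gs q\<^esub>) \<in> generate (gen_wreath Gs) (gw_gens Gs S)"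
      by (rule cst_gen[OF P]) (use args_in[OF z] in \<open>auto simp: Gone\<close>)
    have d: "delta m (onept m) g \<in> generate (gen_wreath Gs) (gw_gens Gs S)"
      using D1[of S m, OF sub symm] g gen by blast
    show "delta m z g \<in> generate (gen_wreath Gs) (gw_gens Gs S)"
      unfolding conj[OF z g] using a b d by (intro gen_mult)
  qed
qed

definition piT :: "'i set \<Rightarrow> ('i \<Rightarrow> ('i \<Rightarrow> 'g) \<Rightarrow> 'g) \<Rightarrow> ('i \<Rightarrow> ('i \<Rightarrow> 'g) \<Rightarrow> 'g)" where
  "piT T f = (\<lambda>q. if q \<in> T then f q else (\<lambda>v\<in>args Gs q. \<one>\<^bsub>Gs q\<^esub>))"

lemma piT_closed: "f \<in> gw_carrier Gs \<Longrightarrow> piT T f \<in> gw_carrier Gs"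
  by (auto simp: piT_def gw_carrier_def Fset_def Gone)

lemma all_gen:
  assumes fin: "\<And>i. finite (carrier (Gs i))"
    and sub: "\<And>i. S i \<subseteq> carrier (Gs i)"
    and symm: "\<And>i s. s \<in> S i \<Longrightarrow> inv\<^bsub>Gs i\<^esub> s \<in> S i"
    and gen: "\<And>i. generate (Gs i) (S i) = carrier (Gs i)"
    and f: "f \<in> gw_carrier Gs"
  shows "f \<in> generate (gen_wreath Gs) (gw_gens Gs S)"
proof -
  have PG: "pure m \<phi> \<in> generate (gen_wreath Gs) (gw_gens Gs S)" if "\<phi> \<in> Fset Gs m" for m \<phi>
    using pure_gen[OF fin delta_gen[OF fin sub symm gen] that] .
  have "piT T f \<in> generate (gen_wreath Gs) (gw_gens Gs S)" for T
  proof (induction T rule: finite_psubset_induct[OF finite])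
    case (1 T)
    show ?case
    proof (cases "T = {}")
      case True
      have "piT T f = gw_one Gs" by (rule ext) (simp add: True piT_def gw_one_def)
      then show ?thesis using gen_one by simp
    next
      case False
      obtain m where m: "m \<in> T" "\<forall>b\<in>T. m \<le> b \<longrightarrow> m = b"
        using finite_has_maximal[OF 1(1) False] by blast
      have fm: "f m \<in> Fset Gs m" using f by (auto simp: gw_carrier_def)
      have e: "piT T f = gw_mult Gs (piT (T - {m}) f) (pure m (f m))"
      proof (rule ext, rule ext)
        fix q v
        show "piT T f q v = gw_mult Gs (piT (T - {m}) f) (pure m (f m)) q v"
        proof (cases "v \<in> args Gs q")
          case False
          then show ?thesis using Fset_out[OF f False] by (simp add: gw_mult_out piT_def)
        next
          case v: True
          have a: "restrict (act Gs (piT (T - {m}) f) v) (up_set q) \<in> args Gs q"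
            using act_args[OF piT_closed[OF f] v] .
          show ?thesis
          proof (cases "q = m")
            case True
            have "restrict (act Gs (piT (T - {m}) f) v) (up_set m) = v"
            proof (rule ext)
              fix j
              show "restrict (act Gs (piT (T - {m}) f) v) (up_set m) j = v j"
              proof (cases "j \<in> up_set m")
                case jm: True
                then have "j \<notin> T - {m}" using m by (auto simp: up_set_def)
                then have "piT (T - {m}) f j = (\<lambda>v\<in>args Gs j. \<one>\<^bsub>Gs j\<^esub>)" unfolding piT_def by (simp only: if_False)
                then show ?thesis using act_triv[of "piT (T - {m}) f" j v m] v True jm by simp
              next
                case False then show ?thesis using v True by (auto simp: args_def)
              qed
            qed
            then show ?thesis using True v m(1) Fset_app[OF f v]
              by (simp add: gw_mult_eq piT_def pure_def Gl_one)
          next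
            case False
            have "piT (T - {m}) f q v \<in> carrier (Gs q)" using Fset_app[OF piT_closed[OF f] v] .
            then show ?thesis using False v a by (simp add: gw_mult_eq pure_def Gr_one piT_def)
          qed
        qed
      qed
      have "T - {m} \<subset> T" using m by auto
      then show ?thesis unfolding e using 1 PG[OF fm] by (intro gen_mult) auto
    qed
  qed
  moreover have "piT UNIV f = f" by (simp add: piT_def)
  ultimately show ?thesis by metis
qed

lemma e_unfold: "e_vals Gs f j = f j (p_pt Gs f j)"
proof -
  have "e_vals Gs f j = wfrec {(k, j). j < k} (\<lambda>rec j. f j (\<lambda>k\<in>up_set j. inv\<^bsub>Gs k\<^esub> (rec k))) j"
    by (simp add: e_vals_def)
  also have "\<dots> = f j (\<lambda>k\<in>up_set j. inv\<^bsub>Gs k\<^esub> (cut (wfrec {(k, j). j < k} (\<lambda>rec j. f j (\<lambda>k\<in>up_set j. inv\<^bsub>Gs k\<^esub> (rec k)))) {(k, j). j < k} j k))"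
    by (subst wfrec[OF wfR]) simp
  also have "\<dots> = f j (p_pt Gs f j)"
    unfolding p_pt_def e_vals_def
    by (rule arg_cong[where f="f j"]) (auto simp: restrict_def cut_apply up_set_def)
  finally show ?thesis .
qed

lemma e_closed: "f \<in> gw_carrier Gs \<Longrightarrow> e_vals Gs f j \<in> carrier (Gs j) \<and> p_pt Gs f j \<in> args Gs j"
proof (induction j rule: wf_induct_rule[OF wfR])
  case (1 j)
  have "p_pt Gs f j \<in> args Gs j"
    using 1 by (auto simp: p_pt_def args_def up_set_def Ginv_closed)
  then show ?case using Fset_app[OF 1(2)] e_unfold by simp
qed

lemma p_restrict: "j \<in> up_set i \<Longrightarrow> restrict (p_pt Gs f i) (up_set j) = p_pt Gs f j"
  using up_set_trans[of j i] by (auto simp: p_pt_def restrict_def fun_eq_iff)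

lemma key:
  assumes f: "f \<in> gw_carrier Gs" and z: "z \<in> args Gs i"
  shows "(restrict (act Gs f z) (up_set i) = onept i) = (z = p_pt Gs f i)"
proof
  assume A: "restrict (act Gs f z) (up_set i) = onept i"
  have "j \<in> up_set i \<longrightarrow> z j = inv\<^bsub>Gs j\<^esub> e_vals Gs f j" for j
  proof (induction j rule: wf_induct_rule[OF wfR])
    case (1 j)
    show ?case
    proof
      assume j: "j \<in> up_set i"
      have r: "restrict z (up_set j) = p_pt Gs f j"
      proof (rule ext)
        fix k show "restrict z (up_set j) k = p_pt Gs f j k"
          using 1 up_set_trans[OF j] by (auto simp: p_pt_def up_set_def)
      qed
      have "z j \<otimes>\<^bsub>Gs j\<^esub> e_vals Gs f j = \<one>\<^bsub>Gs j\<^esub>"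
        using fun_cong[OF A, of j] j by (simp add: act_def onept_def r e_unfold)
      then show "z j = inv\<^bsub>Gs j\<^esub> e_vals Gs f j"
        using group.inv_equality[OF grp] args_in[OF z j] e_closed[OF f] by metis
    qed
  qed
  then show "z = p_pt Gs f i" using z by (auto simp: fun_eq_iff p_pt_def args_def)
next
  assume zp: "z = p_pt Gs f i"
  show "restrict (act Gs f z) (up_set i) = onept i"
  proof (rule ext)
    fix j
    show "restrict (act Gs f z) (up_set i) j = onept i j"
    proof (cases "j \<in> up_set i")
      case True
      have "act Gs f z j = inv\<^bsub>Gs j\<^esub> e_vals Gs f j \<otimes>\<^bsub>Gs j\<^esub> e_vals Gs f j"
        using True by (simp add: act_def zp p_restrict e_unfold[symmetric]) (simp add: p_pt_def)
      then show ?thesis using True e_closed[OF f] by (simp add: Gl_inv onept_def)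
    qed (simp add: onept_def)
  qed
qed

lemma mult_fbar:
  assumes f: "f \<in> gw_carrier Gs" and s: "s \<in> carrier (Gs i)" and v: "v \<in> args Gs q"
  shows "gw_mult Gs f (fbar Gs i s) q v = (if q = i \<and> v = p_pt Gs f i then f q v \<otimes>\<^bsub>Gs q\<^esub> s else f q v)"
  using act_args[OF f v] key[OF f v] Fset_app[OF f v]
  by (auto simp: gw_mult_eq[OF v] fbar_delta delta_app Gr_one)

end

theorem theorem3p14:
  fixes Gs :: "'i::{finite,order} \<Rightarrow> 'g monoid"
    and S :: "'i \<Rightarrow> 'g set"
  assumes grp: "\<And>i. group (Gs i)"
    and fin: "\<And>i. finite (carrier (Gs i))"
    and sub: "\<And>i. S i \<subseteq> carrier (Gs i)"
    and symm: "\<And>i s. s \<in> S i \<Longrightarrow> inv\<^bsub>Gs i\<^esub> s \<in> S i"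
    and no1: "\<And>i. \<one>\<^bsub>Gs i\<^esub> \<notin> S i"
    and gen: "\<And>i. generate (Gs i) (S i) = carrier (Gs i)"
  shows "generate (gen_wreath Gs) (gw_gens Gs S) = carrier (gen_wreath Gs)
     \<and> gw_graph_vertices Gs = carrier (gen_wreath Gs)
     \<and> (\<forall>f h. gw_graph_adj Gs S f h \<longleftrightarrow> cayley_adj (gen_wreath Gs) (gw_gens Gs S) f h)"
proof -
  interpret gw Gs by (rule gw.intro) (rule grp)
  have car: "carrier (gen_wreath Gs) = gw_carrier Gs" by (simp add: gen_wreath_def)
  have gens_car: "gw_gens Gs S \<subseteq> gw_carrier Gs"
    using sub by (auto simp: gw_gens_def fbar_delta intro!: delta_closed)
  have G1: "generate (gen_wreath Gs) (gw_gens Gs S) \<subseteq> carrier (gen_wreath Gs)"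
  proof
    fix x assume "x \<in> generate (gen_wreath Gs) (gw_gens Gs S)"
    then show "x \<in> carrier (gen_wreath Gs)"
    proof (induction x rule: generate.induct)
      case one then show ?case using one_closed by (simp add: gen_wreath_def)
    next
      case (incl h) then show ?case using gens_car car by auto
    next
      case (inv h)
      then obtain i s where h: "h = fbar Gs i s" and s: "s \<in> S i" by (auto simp: gw_gens_def)
      have sc: "s \<in> carrier (Gs i)" "inv\<^bsub>Gs i\<^esub> s \<in> carrier (Gs i)" using s sub Ginv_closed by auto
      have "h \<in> Units (gen_wreath Gs)"
        unfolding Units_def h
        using delta_mult[OF sc] delta_mult[OF sc(2) sc(1)] sc delta_closed
        by (auto simp: gen_wreath_def fbar_delta Gl_inv Gr_inv delta_one intro!: bexI[where x="fbar Gs i (inv\<^bsub>Gs i\<^esub> s)"])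
      then show ?case using monoid.Units_inv_closed[OF monoid_gw] by blast
    next
      case (eng h1 h2) then show ?case using mult_closed by (simp add: gen_wreath_def)
    qed
  qed
  have G2: "carrier (gen_wreath Gs) \<subseteq> generate (gen_wreath Gs) (gw_gens Gs S)"
    using all_gen[OF fin sub symm gen] car by auto
  have V: "gw_graph_vertices Gs = carrier (gen_wreath Gs)"
    by (simp add: car gw_graph_vertices_def gw_carrier_def)
  have A: "gw_graph_adj Gs S f h \<longleftrightarrow> cayley_adj (gen_wreath Gs) (gw_gens Gs S) f h" for f h
  proof
    assume adj: "gw_graph_adj Gs S f h"
    then have f: "f \<in> gw_carrier Gs" and h: "h \<in> gw_carrier Gs"
      by (auto simp: gw_graph_adj_def gw_graph_vertices_def gw_carrier_def)
    from adj obtain i where o: "\<forall>j. j \<noteq> i \<longrightarrow> f j = h j"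
      and d: "\<forall>z\<in>args Gs i. z \<noteq> p_pt Gs f i \<longrightarrow> f i z = h i z"
      and c: "cayley_adj (Gs i) (S i) (f i (p_pt Gs f i)) (h i (p_pt Gs f i))"
      by (auto simp: gw_graph_adj_def)
    from c obtain t where t: "t \<in> S i" and ft: "f i (p_pt Gs f i) \<otimes>\<^bsub>Gs i\<^esub> t = h i (p_pt Gs f i)"
      by (auto simp: cayley_adj_def)
    have tc: "t \<in> carrier (Gs i)" using t sub by auto
    have "gw_mult Gs f (fbar Gs i t) = h"
    proof (rule ext, rule ext)
      fix q v
      show "gw_mult Gs f (fbar Gs i t) q v = h q v"
      proof (cases "v \<in> args Gs q")
        case True
        then show ?thesis using mult_fbar[OF f tc True] o d ft by auto
      next
        case False
        then show ?thesis using Fset_out[OF h False] by (simp add: gw_mult_out)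
      qed
    qed
    then show "cayley_adj (gen_wreath Gs) (gw_gens Gs S) f h"
      using f h t by (auto simp: cayley_adj_def gen_wreath_def gw_gens_def)
  next
    assume ca: "cayley_adj (gen_wreath Gs) (gw_gens Gs S) f h"
    then obtain i s where f: "f \<in> gw_carrier Gs" and h: "h \<in> gw_carrier Gs" and s: "s \<in> S i"
      and hf: "h = gw_mult Gs f (fbar Gs i s)"
      by (auto simp: cayley_adj_def gen_wreath_def gw_gens_def)
    have sc: "s \<in> carrier (Gs i)" using s sub by auto
    have p: "p_pt Gs f i \<in> args Gs i" using e_closed[OF f] by blast
    have o: "\<forall>j. j \<noteq> i \<longrightarrow> f j = h j"
    proof (intro allI impI ext)
      fix j v assume "j \<noteq> i"
      then show "f j v = h j v"
        using mult_fbar[OF f sc, of v j] Fset_out[OF f, of v j] hf by (cases "v \<in> args Gs j") (auto simp: gw_mult_out)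
    qed
    have d: "\<forall>z\<in>args Gs i. z \<noteq> p_pt Gs f i \<longrightarrow> f i z = h i z"
      using mult_fbar[OF f sc] hf by auto
    have "cayley_adj (Gs i) (S i) (f i (p_pt Gs f i)) (h i (p_pt Gs f i))"
      using mult_fbar[OF f sc p] hf Fset_app[OF f p] Fset_app[OF h p] s by (auto simp: cayley_adj_def)
    then show "gw_graph_adj Gs S f h"
      using f h o d by (auto simp: gw_graph_adj_def gw_graph_vertices_def gw_carrier_def)
  qed
  show ?thesis using G1 G2 V A by blast
qed

end
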